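(* Let $\mathbb{F}$ be a finite field of characteristic $2$ and let $\ell,r,h$ be positive integers. Let $S=\{\alpha_{i,s}\}_{i\in[\ell],s\in[r+1]}$ be a multi-set of $\ell(r+1)$ elements of $\mathbb{F}$. Let $\mathcal{C}(S,r,h)\subseteq\mathbb{F}^{\ell(r+1)}$ be the set of vectors $(x_{i,s})_{i\in[\ell],s\in[r+1]}$ satisfying $\sum_{i=1}^{\ell}\sum_{s=1}^{r+1}\alpha_{i,s}^{2^{j-1}}x_{i,s}=0$ for $j=1,\ldots,h$, and $\sum_{s=1}^{r+1}x_{i,s}=0$ for $i=1,\ldots,\ell$. Let ${\bf e}\in[r+1]^\ell$ and let $\mathcal{C}^{-{\bf e}}$ be the code obtained by puncturing $\mathcal{C}(S,r,h)$ in the positions $\{(i,{\bf e}(i))\}_{i=1}^{\ell}$ (i.e. deleting these $\ell$ coordinates). Then $\mathcal{C}^{-{\bf e}}$ is an MDS code with parameters $[\ell r,\ell r-h]$ (i.e. of minimum distance $h+1$) if and only if the multi-set $T(S,{\bf e})=\{\alpha_{i,s}+\alpha_{i,{\bf e}(i)}\}_{i\in[\ell],\,s\in[r+1]\setminus\{{\bf e}(i)\}}$ is $h$-wise independent over $\mathbb{F}_2$.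
   Context: A multi-set $T\subseteq\mathbb{F}$ is $h$-wise independent over $\mathbb{F}_2$ if every sub-multi-set of $T$ of size at most $h$ is linearly independent over $\mathbb{F}_2$. *)

theory Defs
  imports Main HOL.Vector_Spaces "HOL-Library.Function_Algebras"
begin

text \<open>Vectors over the field 'a are functions (nat \<times> nat) \<Rightarrow> 'a that vanish outside the
  relevant finite coordinate set; coordinates (i,s) are 0-indexed: i < l, s < r+1.\<close>

definition fscale :: "'a::field \<Rightarrow> ('b \<Rightarrow> 'a) \<Rightarrow> ('b \<Rightarrow> 'a)" where
  "fscale c x = (\<lambda>p. c * x p)"

definition fdim :: "('b \<Rightarrow> 'a::field) set \<Rightarrow> nat" where
  "fdim C = vector_space.dim fscale C"

definition hweight :: "('b \<Rightarrow> 'a::zero) \<Rightarrow> nat" where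
  "hweight x = card {p. x p \<noteq> 0}"

text \<open>Minimum distance of a linear code of length n; the zero code gets the
  conventional value n+1.\<close>
definition min_dist :: "nat \<Rightarrow> ('b \<Rightarrow> 'a::zero) set \<Rightarrow> nat" where
  "min_dist n C = (if C - {0} = {} then n + 1 else Min (hweight ` (C - {0})))"

definition is_mds :: "nat \<Rightarrow> nat \<Rightarrow> ('b \<Rightarrow> 'a::field) set \<Rightarrow> bool" where
  "is_mds n k C \<longleftrightarrow> fdim C = k \<and> min_dist n C = n - k + 1"

definition coords :: "nat \<Rightarrow> nat \<Rightarrow> (nat \<times> nat) set" where
  "coords l r = {(i,s). i < l \<and> s < r + 1}"

definition code_C :: "nat \<Rightarrow> nat \<Rightarrow> nat \<Rightarrow> (nat \<Rightarrow> nat \<Rightarrow> 'a::field) \<Rightarrow> (nat \<times> nat \<Rightarrow> 'a) set" where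
  "code_C l r h \<alpha> = {x. (\<forall>p. p \<notin> coords l r \<longrightarrow> x p = 0)
      \<and> (\<forall>j\<in>{1..h}. (\<Sum>(i,s)\<in>coords l r. \<alpha> i s ^ (2 ^ (j - 1)) * x (i,s)) = 0)
      \<and> (\<forall>i<l. (\<Sum>s<r+1. x (i,s)) = 0)}"

definition punct_coords :: "nat \<Rightarrow> nat \<Rightarrow> (nat \<Rightarrow> nat) \<Rightarrow> (nat \<times> nat) set" where
  "punct_coords l r e = {(i,s). i < l \<and> s < r + 1 \<and> s \<noteq> e i}"

definition puncture :: "(nat \<times> nat) set \<Rightarrow> (nat \<times> nat \<Rightarrow> 'a::zero) set \<Rightarrow> (nat \<times> nat \<Rightarrow> 'a) set" where
  "puncture P C = (\<lambda>x. \<lambda>p. if p \<in> P then x p else 0) ` C"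

text \<open>Linear independence over F_2 (the prime subfield {0,1} of a field of characteristic 2)
  of the multiset given by the family v on index set J.\<close>
definition f2_indep :: "('i \<Rightarrow> 'a::field) \<Rightarrow> 'i set \<Rightarrow> bool" where
  "f2_indep v J \<longleftrightarrow> (\<forall>c. (\<forall>t\<in>J. c t \<in> {0,1}) \<longrightarrow> (\<Sum>t\<in>J. c t * v t) = 0 \<longrightarrow> (\<forall>t\<in>J. c t = 0))"

definition hwise_indep :: "nat \<Rightarrow> ('i \<Rightarrow> 'a::field) \<Rightarrow> 'i set \<Rightarrow> bool" where
  "hwise_indep h v I \<longleftrightarrow> (\<forall>J\<subseteq>I. card J \<le> h \<longrightarrow> f2_indep v J)"

end

theory Submission
  imports Defs
begin


lemma two_zero_sq_add: fixes a b :: "'a::field" assumes "(2::'a) = 0"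
  shows "(a + b)^2 = a^2 + b^2"
proof -
  have "(a+b)^2 = a^2 + b^2 + 2*a*b" by (simp add: power2_eq_square algebra_simps)
  thus ?thesis using assms by simp
qed

lemma frob_sum2: fixes f :: "'i \<Rightarrow> 'a::field" assumes "(2::'a) = 0"
  shows "(\<Sum>t\<in>J. f t)^2 = (\<Sum>t\<in>J. (f t)^2)"
proof (cases "finite J")
  case True thus ?thesis
    by (induction J rule: finite_induct) (auto simp: two_zero_sq_add[OF assms])
qed simp

lemma frob_sum: fixes f :: "'i \<Rightarrow> 'a::field" assumes "(2::'a) = 0"
  shows "(\<Sum>t\<in>J. f t)^(2^k) = (\<Sum>t\<in>J. (f t)^(2^k))"
proof (induction k)
  case (Suc k)
  have "(\<Sum>t\<in>J. f t)^(2^Suc k) = ((\<Sum>t\<in>J. f t)^(2^k))^2" by (simp add: power_mult[symmetric] mult.commute)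
  also have "\<dots> = (\<Sum>t\<in>J. ((f t)^(2^k))^2)" using Suc frob_sum2[OF assms] by simp
  also have "\<dots> = (\<Sum>t\<in>J. (f t)^(2^Suc k))" by (simp add: power_mult[symmetric] mult.commute)
  finally show ?case .
qed simp

lemma frob_add: fixes a b :: "'a::field" assumes "(2::'a) = 0"
  shows "(a + b)^(2^k) = a^(2^k) + b^(2^k)"
  using frob_sum[OF assms, of "\<lambda>x. if x then a else b" UNIV k] by (simp add: UNIV_bool add.commute)

lemma minus_eq_plus2: fixes a :: "'a::field" assumes "(2::'a) = 0" shows "- a = a"
proof -
  have "a + a = 2 * a" by simp
  hence "a + a = 0" using assms by simp
  thus ?thesis by (simp add: add_eq_0_iff)
qed

lemma bool_pow: fixes c :: "'a::field" assumes "c \<in> {0,1}" shows "c^(2^k) = c"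
  using assms by auto

lemma moore:
  fixes \<beta> :: "'i \<Rightarrow> 'a::field"
  assumes two: "(2::'a) = 0"
  shows "finite J \<Longrightarrow> card J \<le> h \<Longrightarrow> f2_indep \<beta> J \<Longrightarrow>
     (\<forall>j<h. (\<Sum>t\<in>J. a t * \<beta> t ^ 2^(k+j)) = 0) \<Longrightarrow> \<forall>t\<in>J. a t = 0"
proof (induction h arbitrary: J a k)
  case 0 thus ?case by simp
next
  case (Suc h)
  show ?case
  proof (rule ccontr)
    assume "\<not> (\<forall>t\<in>J. a t = 0)"
    then obtain t0 where t0: "t0 \<in> J" "a t0 \<noteq> 0" by blast
    define a' where "a' t = a t / a t0" for t
    have a't0: "a' t0 = 1" using t0 by (simp add: a'_def)
    have eq': "(\<Sum>t\<in>J. a' t * \<beta> t ^ 2^(k+j)) = 0" if "j < Suc h" for j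
    proof -
      have "(\<Sum>t\<in>J. a' t * \<beta> t ^ 2^(k+j)) = (\<Sum>t\<in>J. a t * \<beta> t ^ 2^(k+j)) / a t0"
        by (simp add: a'_def sum_divide_distrib)
      thus ?thesis using Suc.prems(4) that by simp
    qed
    define b where "b t = a' t - (a' t)^2" for t
    have eqb: "(\<Sum>t\<in>J - {t0}. b t * \<beta> t ^ 2^(Suc k+j)) = 0" if "j < h" for j
    proof -
      have e1: "(\<Sum>t\<in>J. a' t * \<beta> t ^ 2^(Suc k+j)) = 0" using eq'[of "Suc j"] that by simp
      have "(\<Sum>t\<in>J. a' t * \<beta> t ^ 2^(k+j))^2 = 0" using eq'[of j] that by simp
      hence e2: "(\<Sum>t\<in>J. (a' t)^2 * \<beta> t ^ 2^(Suc k+j)) = 0"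
        by (simp add: frob_sum2[OF two] power_mult_distrib power_mult[symmetric] mult.commute)
      have "(\<Sum>t\<in>J. b t * \<beta> t ^ 2^(Suc k+j)) = 0"
        using e1 e2 by (simp add: b_def left_diff_distrib sum_subtractf)
      moreover have "b t0 = 0" using a't0 by (simp add: b_def)
      ultimately show ?thesis using t0(1) Suc.prems(1) by (simp add: sum.remove)
    qed
    have ind: "f2_indep \<beta> (J - {t0})" unfolding f2_indep_def
    proof (intro allI impI)
      fix c assume c01: "\<forall>t\<in>J - {t0}. c t \<in> {0,1}" and cs: "(\<Sum>t\<in>J - {t0}. c t * \<beta> t) = 0"
      define c' where "c' t = (if t = t0 then 0 else c t)" for t
      have "\<forall>t\<in>J. c' t \<in> {0,1}" using c01 by (auto simp: c'_def)
      moreover have "(\<Sum>t\<in>J. c' t * \<beta> t) = 0"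
        using cs Suc.prems(1) t0(1) by (simp add: sum.remove c'_def)
      ultimately have "\<forall>t\<in>J. c' t = 0" using Suc.prems(3) unfolding f2_indep_def by blast
      thus "\<forall>t\<in>J - {t0}. c t = 0" unfolding c'_def by (metis DiffD1 DiffD2 singletonI)
    qed
    have "\<forall>t\<in>J - {t0}. b t = 0"
      using Suc.IH[of "J - {t0}" b "Suc k"] Suc.prems(1,2) ind eqb t0(1) by auto
    hence bin: "\<forall>t\<in>J. a' t \<in> {0,1}" using a't0
      by (auto simp: b_def power2_eq_square)
    have "(\<Sum>t\<in>J. a' t * \<beta> t ^ 2^k) = 0" using eq'[of 0] by simp
    moreover have "(\<Sum>t\<in>J. a' t * \<beta> t ^ 2^k) = (\<Sum>t\<in>J. a' t * \<beta> t)^(2^k)"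
      using bin by (simp add: frob_sum[OF two] power_mult_distrib bool_pow cong: sum.cong)
    ultimately have "(\<Sum>t\<in>J. a' t * \<beta> t) = 0" by simp
    hence "\<forall>t\<in>J. a' t = 0" using Suc.prems(3) bin unfolding f2_indep_def by blast
    thus False using a't0 t0 by simp
  qed
qed



lemma homog_exists:
  fixes c :: "nat \<Rightarrow> 'i \<Rightarrow> 'a::field"
  shows "finite V \<Longrightarrow> card V > m \<Longrightarrow>
    \<exists>x. (\<forall>v. v \<notin> V \<longrightarrow> x v = 0) \<and> (\<exists>v\<in>V. x v \<noteq> 0) \<and> (\<forall>j<m. (\<Sum>v\<in>V. c j v * x v) = 0)"
proof (induction m arbitrary: V c)
  case 0
  then obtain v where "v \<in> V" by (metis card.empty ex_in_conv less_irrefl)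
  thus ?case by (intro exI[of _ "\<lambda>w. if w = v then 1 else 0"]) auto
next
  case (Suc m)
  show ?case
  proof (cases "\<forall>v\<in>V. c m v = 0")
    case True
    from Suc.IH[of V c] Suc.prems obtain x where
      x: "\<forall>v. v \<notin> V \<longrightarrow> x v = 0" "\<exists>v\<in>V. x v \<noteq> 0" "\<forall>j<m. (\<Sum>v\<in>V. c j v * x v) = 0" by auto
    have "\<forall>j<Suc m. (\<Sum>v\<in>V. c j v * x v) = 0" using x(3) True by (auto simp: less_Suc_eq)
    with x show ?thesis by blast
  next
    case False
    then obtain v0 where v0: "v0 \<in> V" "c m v0 \<noteq> 0" by blast
    define c' where "c' j v = c j v - c j v0 * c m v / c m v0" for j v
    have "card (V - {v0}) > m" using Suc.prems v0 by simp
    from Suc.IH[of "V - {v0}" c'] this Suc.prems(1) obtain x' where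
      x': "\<forall>v. v \<notin> V - {v0} \<longrightarrow> x' v = 0" "\<exists>v\<in>V - {v0}. x' v \<noteq> 0"
        "\<forall>j<m. (\<Sum>v\<in>V - {v0}. c' j v * x' v) = 0" by auto
    define S where "S = (\<Sum>v\<in>V - {v0}. c m v * x' v)"
    define x where "x = x'(v0 := - S / c m v0)"
    have sumx: "(\<Sum>v\<in>V. c j v * x v) = c j v0 * (- S / c m v0) + (\<Sum>v\<in>V - {v0}. c j v * x' v)" for j
      using Suc.prems(1) v0(1) by (simp add: sum.remove x_def)
    have "(\<Sum>v\<in>V. c j v * x v) = 0" if "j < Suc m" for j
    proof (cases "j = m")
      case True thus ?thesis using sumx[of m] v0(2) by (simp add: S_def)
    next
      case False
      hence "j < m" using that by simp
      hence "(\<Sum>v\<in>V - {v0}. c' j v * x' v) = 0" using x'(3) by simp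
      moreover have "(\<Sum>v\<in>V - {v0}. c' j v * x' v) = (\<Sum>v\<in>V - {v0}. c j v * x' v) - c j v0 / c m v0 * S"
        by (simp add: c'_def S_def left_diff_distrib sum_subtractf sum_distrib_left algebra_simps)
      ultimately show ?thesis using sumx[of j] by (simp add: algebra_simps)
    qed
    moreover have "\<forall>v. v \<notin> V \<longrightarrow> x v = 0" using x'(1) v0(1) by (auto simp: x_def)
    moreover have "\<exists>v\<in>V. x v \<noteq> 0" using x'(2) by (auto simp: x_def)
    ultimately show ?thesis by blast
  qed
qed



lemma vs_fscale: "vector_space (fscale :: 'a::field \<Rightarrow> ('b \<Rightarrow> 'a) \<Rightarrow> _)"
  by unfold_locales (auto simp: fscale_def fun_eq_iff algebra_simps)

definition Kc :: "nat \<Rightarrow> ('i \<Rightarrow> 'a::field) \<Rightarrow> 'i set \<Rightarrow> ('i \<Rightarrow> 'a) set" where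
  "Kc h \<beta> P = {y. (\<forall>p. p \<notin> P \<longrightarrow> y p = 0) \<and> (\<forall>j\<in>{1..h}. (\<Sum>t\<in>P. \<beta> t ^ 2^(j-1) * y t) = 0)}"

lemma supp_sub: "y \<in> Kc h \<beta> P \<Longrightarrow> {p. y p \<noteq> 0} \<subseteq> P"
  by (auto simp: Kc_def)

lemma Kc_memI:
  assumes "finite P" "V \<subseteq> P" "\<forall>p. p \<notin> V \<longrightarrow> y p = 0"
    "\<forall>j<h. (\<Sum>t\<in>V. \<beta> t ^ 2^j * y t) = 0"
  shows "y \<in> Kc h \<beta> P"
proof -
  have "(\<Sum>t\<in>P. \<beta> t ^ 2^(j-1) * y t) = 0" if "j \<in> {1..h}" for j
  proof -
    have "(\<Sum>t\<in>P. \<beta> t ^ 2^(j-1) * y t) = (\<Sum>t\<in>V. \<beta> t ^ 2^(j-1) * y t)"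
      by (rule sum.mono_neutral_right) (use assms(1-3) in auto)
    also have "\<dots> = 0" using assms(4) that by (cases j) auto
    finally show ?thesis .
  qed
  thus ?thesis using assms(2,3) by (auto simp: Kc_def)
qed

lemma Kc_small_zero:
  assumes two: "(2::'a::field) = 0" and fin: "finite P" and hw: "hwise_indep h \<beta> P"
    and y: "y \<in> Kc h (\<beta>::'i \<Rightarrow> 'a) P" and c: "card {p. y p \<noteq> 0} \<le> h"
  shows "y = 0"
proof -
  let ?J = "{p. y p \<noteq> 0}"
  have JP: "?J \<subseteq> P" using supp_sub[OF y] .
  hence finJ: "finite ?J" using fin finite_subset by blast
  have ind: "f2_indep \<beta> ?J" using hw JP c by (auto simp: hwise_indep_def)
  have "(\<Sum>t\<in>?J. y t * \<beta> t ^ 2^(0+j)) = 0" if "j < h" for j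
  proof -
    have "(\<Sum>t\<in>?J. y t * \<beta> t ^ 2^(0+j)) = (\<Sum>t\<in>P. y t * \<beta> t ^ 2^(0+j))"
      by (rule sum.mono_neutral_left) (use fin JP in auto)
    also have "\<dots> = (\<Sum>t\<in>P. \<beta> t ^ 2^(Suc j - 1) * y t)" by (simp add: mult.commute)
    also have "\<dots> = 0"
    proof -
      have H: "\<forall>j\<in>{1..h}. (\<Sum>t\<in>P. \<beta> t ^ 2^(j-1) * y t) = 0" using y by (simp add: Kc_def)
      have "Suc j \<in> {1..h}" using that by simp
      from bspec[OF H this] show ?thesis .
    qed
    finally show ?thesis .
  qed
  hence "\<forall>t\<in>?J. y t = 0" using moore[OF two finJ c ind, of y 0] by blast
  thus ?thesis by (auto simp: fun_eq_iff)
qed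

lemma Kc_add: "y \<in> Kc h \<beta> P \<Longrightarrow> z \<in> Kc h \<beta> P \<Longrightarrow> y - z \<in> Kc h \<beta> P"
  by (auto simp: Kc_def right_diff_distrib sum_subtractf)

lemma Kc_scale: "y \<in> Kc h \<beta> P \<Longrightarrow> fscale c y \<in> Kc h \<beta> P"
proof -
  have e: "(\<Sum>t\<in>P. \<beta> t ^ q * (c*y t)) = c * (\<Sum>t\<in>P. \<beta> t ^ q * y t)" for q
    by (simp add: sum_distrib_left algebra_simps)
  assume "y \<in> Kc h \<beta> P" thus ?thesis by (auto simp: Kc_def fscale_def e)
qed

lemma Kc_plus: "y \<in> Kc h \<beta> P \<Longrightarrow> z \<in> Kc h \<beta> P \<Longrightarrow> y + z \<in> Kc h \<beta> P"
  by (auto simp: Kc_def distrib_left sum.distrib)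

lemma Kc_zero: "0 \<in> Kc h \<beta> P" by (auto simp: Kc_def)
lemma Kc_zero': "(\<lambda>_. 0) \<in> Kc h \<beta> P" by (auto simp: Kc_def)

lemma Kc_sum: "finite R \<Longrightarrow> (\<And>r. r \<in> R \<Longrightarrow> f r \<in> Kc h \<beta> P) \<Longrightarrow> sum f R \<in> Kc h \<beta> P"
proof (induction R rule: finite_induct)
  case empty thus ?case using Kc_zero' by simp
next
  case (insert a R)
  have "f a + sum f R \<in> Kc h \<beta> P"
    using Kc_plus[OF insert.prems[of a] insert.IH] insert.prems by simp
  thus ?case by (subst sum.insert[OF insert.hyps])
qed



lemma sum_fun_app: "(sum f R) p = (\<Sum>r\<in>R. f r p)"
  by (induction R rule: infinite_finite_induct) auto

lemma hweight_le: assumes "finite P" "y \<in> Kc h \<beta> P" shows "hweight y \<le> card P"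
  unfolding hweight_def using supp_sub[OF assms(2)] assms(1) by (rule card_mono[rotated])

lemma fin_img: assumes "finite P" shows "finite (hweight ` (Kc h \<beta> P - {0}))"
proof -
  have "hweight ` (Kc h \<beta> P - {0}) \<subseteq> {..card P}" using hweight_le[OF assms] by auto
  thus ?thesis using finite_subset by blast
qed

lemma mds_Kc:
  fixes \<beta> :: "'i \<Rightarrow> 'a::field"
  assumes two: "(2::'a) = 0" and fin: "finite P" and n: "card P = n" and hn: "h \<le> n"
  shows "is_mds n (n-h) (Kc h \<beta> P) \<longleftrightarrow> hwise_indep h \<beta> P"
proof
  assume mds: "is_mds n (n-h) (Kc h \<beta> P)"
  hence md: "min_dist n (Kc h \<beta> P) = h + 1" using hn by (simp add: is_mds_def)
  show "hwise_indep h \<beta> P" unfolding hwise_indep_def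
  proof (intro allI impI)
    fix J assume JP: "J \<subseteq> P" and cJ: "card J \<le> h"
    have finJ: "finite J" using JP fin finite_subset by blast
    show "f2_indep \<beta> J" unfolding f2_indep_def
    proof (intro allI impI ballI, rule ccontr)
      fix c t0 assume c01: "\<forall>t\<in>J. c t \<in> {0,1}" and cs: "(\<Sum>t\<in>J. c t * \<beta> t) = 0"
        and t0: "t0 \<in> J" and ct0: "c t0 \<noteq> 0"
      define y where "y t = (if t \<in> J then c t else 0)" for t
      have "\<forall>j<h. (\<Sum>t\<in>J. \<beta> t ^ 2^j * y t) = 0"
      proof (intro allI impI)
        fix j
        have "(\<Sum>t\<in>J. \<beta> t ^ 2^j * y t) = (\<Sum>t\<in>J. (c t * \<beta> t) ^ 2^j)"
          using c01 by (intro sum.cong) (auto simp: y_def power_mult_distrib bool_pow)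
        also have "\<dots> = (\<Sum>t\<in>J. c t * \<beta> t) ^ 2^j" by (simp add: frob_sum[OF two])
        finally show "(\<Sum>t\<in>J. \<beta> t ^ 2^j * y t) = 0" using cs by simp
      qed
      hence yK: "y \<in> Kc h \<beta> P" using Kc_memI[OF fin JP, of y] by (auto simp: y_def)
      have y0: "y \<noteq> 0" using t0 ct0 by (auto simp: y_def fun_eq_iff)
      have "hweight y \<le> card J" unfolding hweight_def
        by (rule card_mono[OF finJ]) (auto simp: y_def)
      moreover have "min_dist n (Kc h \<beta> P) \<le> hweight y"
      proof -
        have "Min (hweight ` (Kc h \<beta> P - {0})) \<le> hweight y"
          by (rule Min_le[OF fin_img[OF fin]]) (use yK y0 in auto)
        moreover have "Kc h \<beta> P - {0} \<noteq> {}" using yK y0 by auto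
        ultimately show ?thesis unfolding min_dist_def by simp
      qed
      ultimately show False using md cJ by simp
    qed
  qed
next
  assume hw: "hwise_indep h \<beta> P"
  interpret V: vector_space "fscale :: 'a \<Rightarrow> ('i \<Rightarrow> 'a) \<Rightarrow> _" by (rule vs_fscale)
  have W: "y = 0" if "y \<in> Kc h \<beta> P" "card {p. y p \<noteq> 0} \<le> h" for y
    using Kc_small_zero[OF two fin hw that] .
  show "is_mds n (n-h) (Kc h \<beta> P)"
  proof (cases "h = n")
    case True
    have K0: "Kc h \<beta> P \<subseteq> {0}"
    proof
      fix y assume y: "y \<in> Kc h \<beta> P"
      have "card {p. y p \<noteq> 0} \<le> h" using hweight_le[OF fin y] True n by (simp add: hweight_def)
      thus "y \<in> {0}" using W y by simp
    qed
    hence "fdim (Kc h \<beta> P) = 0" unfolding fdim_def by (intro V.dim_unique[of "{}"]) (auto simp: V.span_empty V.independent_empty)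
    moreover have "min_dist n (Kc h \<beta> P) = n + 1" using K0 by (auto simp: min_dist_def)
    ultimately show ?thesis using True by (simp add: is_mds_def)
  next
    case False
    hence hn': "h < n" using hn by simp
    obtain Q where QP: "Q \<subseteq> P" and cQ: "card Q = h" and finQ: "finite Q"
      using obtain_subset_with_card_n[of h P] hn n by auto
    define R where "R = P - Q"
    have finR: "finite R" using fin by (simp add: R_def)
    have cR: "card R = n - h" using QP cQ n fin finQ by (simp add: R_def card_Diff_subset)
    have ex: "\<exists>x. x \<in> Kc h \<beta> P \<and> (\<forall>p. p \<notin> insert r Q \<longrightarrow> x p = 0) \<and> x r = 1" if rR: "r \<in> R" for r
    proof -
      have rQ: "r \<notin> Q" "r \<in> P" using rR by (auto simp: R_def)
      have "card (insert r Q) > h" using rQ finQ cQ by simp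
      from homog_exists[of "insert r Q" h "\<lambda>j v. \<beta> v ^ 2^j"] this finQ obtain x where
        x: "\<forall>v. v \<notin> insert r Q \<longrightarrow> x v = 0" "\<exists>v\<in>insert r Q. x v \<noteq> 0"
           "\<forall>j<h. (\<Sum>v\<in>insert r Q. \<beta> v ^ 2^j * x v) = 0" by auto
      have xK: "x \<in> Kc h \<beta> P" using Kc_memI[OF fin _ x(1) x(3)] QP rQ by auto
      have xr: "x r \<noteq> 0"
      proof
        assume "x r = 0"
        hence "{p. x p \<noteq> 0} \<subseteq> Q" using x(1) by auto
        hence "card {p. x p \<noteq> 0} \<le> h" using cQ card_mono[OF finQ] by fastforce
        hence "x = 0" using W xK by simp
        thus False using x(2) by simp
      qed
      show ?thesis
        using Kc_scale[OF xK, of "1 / x r"] x(1) xr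
        by (intro exI[of _ "fscale (1 / x r) x"]) (auto simp: fscale_def)
    qed
    define b where "b r = (SOME x. x \<in> Kc h \<beta> P \<and> (\<forall>p. p \<notin> insert r Q \<longrightarrow> x p = 0) \<and> x r = 1)" for r
    have b: "b r \<in> Kc h \<beta> P \<and> (\<forall>p. p \<notin> insert r Q \<longrightarrow> b r p = 0) \<and> b r r = 1" if "r \<in> R" for r
      unfolding b_def by (rule someI_ex[OF ex[OF that]])
    have boff: "b r r' = 0" if "r \<in> R" "r' \<in> R" "r' \<noteq> r" for r r'
      using b[OF that(1)] that by (auto simp: R_def)
    have bwt: "hweight (b r) = h + 1" if rR: "r \<in> R" for r
    proof -
      have "{p. b r p \<noteq> 0} \<subseteq> insert r Q" using b[OF rR] by auto
      hence le: "hweight (b r) \<le> h + 1" unfolding hweight_def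
      proof -
        have "card (insert r Q) \<le> h + 1" using finQ cQ by (simp add: card_insert_if)
        moreover have "card {p. b r p \<noteq> 0} \<le> card (insert r Q)"
          using \<open>{p. b r p \<noteq> 0} \<subseteq> insert r Q\<close> finQ by (intro card_mono) auto
        ultimately show "card {p. b r p \<noteq> 0} \<le> h + 1" by simp
      qed
      have "\<not> hweight (b r) \<le> h"
      proof
        assume "hweight (b r) \<le> h"
        hence "b r = 0" using W b[OF rR] by (simp add: hweight_def)
        thus False using b[OF rR] by simp
      qed
      thus ?thesis using le by simp
    qed
    obtain r0 where r0: "r0 \<in> R" using cR hn' by fastforce
    have lowK: "hweight y \<ge> h + 1" if "y \<in> Kc h \<beta> P - {0}" for y
      using W that by (force simp: hweight_def)
    have md: "min_dist n (Kc h \<beta> P) = h + 1"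
    proof -
      have b0: "b r0 \<in> Kc h \<beta> P - {0}" using b[OF r0] by (auto simp: fun_eq_iff) (metis zero_neq_one)
      hence "Min (hweight ` (Kc h \<beta> P - {0})) = h + 1"
        using lowK bwt[OF r0] fin_img[OF fin] by (intro Min_eqI) force+
      thus ?thesis using b0 by (auto simp: min_dist_def)
    qed
    have injb: "inj_on b R"
    proof
      fix r r' assume "r \<in> R" "r' \<in> R" "b r = b r'"
      show "r = r'"
      proof (rule ccontr)
        assume "r \<noteq> r'"
        hence "b r' r = 0" using boff \<open>r \<in> R\<close> \<open>r' \<in> R\<close> by simp
        moreover have "b r r = 1" using b \<open>r \<in> R\<close> by simp
        ultimately show False using \<open>b r = b r'\<close> by simp
      qed
    qed
    have evalsum: "(\<Sum>r\<in>R. fscale (u r) (b r)) r' = u r'" if "r' \<in> R" for u r'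
    proof -
      have "(\<Sum>r\<in>R. fscale (u r) (b r)) r' = (\<Sum>r\<in>R. u r * b r r')" by (simp add: sum_fun_app fscale_def)
      also have "\<dots> = u r' * b r' r' + (\<Sum>r\<in>R - {r'}. u r * b r r')" using finR that by (simp add: sum.remove)
      also have "\<dots> = u r'"
      proof -
        have "(\<Sum>r\<in>R - {r'}. u r * b r r') = 0"
          by (rule sum.neutral) (use boff that in auto)
        thus ?thesis using b[OF that] by simp
      qed
      finally show ?thesis .
    qed
    have dim: "V.dim (Kc h \<beta> P) = n - h"
    proof (rule V.dim_unique[of "b ` R"])
      show "b ` R \<subseteq> Kc h \<beta> P" using b by auto
      show "Kc h \<beta> P \<subseteq> V.span (b ` R)"
      proof
        fix y assume y: "y \<in> Kc h \<beta> P"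
        define z where "z = y - (\<Sum>r\<in>R. fscale (y r) (b r))"
        have zK: "z \<in> Kc h \<beta> P" unfolding z_def
        proof (rule Kc_add[OF y])
          show "(\<Sum>r\<in>R. fscale (y r) (b r)) \<in> Kc h \<beta> P"
            by (rule Kc_sum[OF finR]) (use Kc_scale b in blast)
        qed
        have "{p. z p \<noteq> 0} \<subseteq> Q"
        proof
          fix p assume p: "p \<in> {p. z p \<noteq> 0}"
          hence "p \<in> P" using supp_sub[OF zK] by auto
          moreover have "p \<notin> R" using p evalsum[of p y] by (auto simp: z_def)
          ultimately show "p \<in> Q" by (auto simp: R_def)
        qed
        hence "card {p. z p \<noteq> 0} \<le> h" using cQ card_mono[OF finQ] by fastforce
        hence "z = 0" using W zK by simp
        hence "y = (\<Sum>r\<in>R. fscale (y r) (b r))" by (simp add: z_def)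
        moreover have "(\<Sum>r\<in>R. fscale (y r) (b r)) \<in> V.span (b ` R)"
          by (intro V.span_sum V.span_scale V.span_base) auto
        ultimately show "y \<in> V.span (b ` R)" by simp
      qed
      show "V.independent (b ` R)"
      proof
        assume "V.dependent (b ` R)"
        then obtain u where u: "\<exists>v\<in>b ` R. u v \<noteq> 0" "(\<Sum>v\<in>b ` R. fscale (u v) v) = 0"
          using V.dependent_finite finR by blast
        have "(\<Sum>r\<in>R. fscale (u (b r)) (b r)) = 0" using u(2) sum.reindex[OF injb, of "\<lambda>v. fscale (u v) v"] by (simp add: comp_def)
        hence "u (b r) = 0" if "r \<in> R" for r using evalsum[OF that, of "\<lambda>r. u (b r)"] by simp
        thus False using u(1) by auto
      qed
      show "card (b ` R) = n - h" using card_image[OF injb] cR by simp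
    qed
    show ?thesis using dim md hn by (simp add: is_mds_def fdim_def)
  qed
qed


lemma Psig: "punct_coords l r e = Sigma {..<l} (\<lambda>i. {..<r+1} - {e i})"
  by (auto simp: punct_coords_def)
lemma Csig: "coords l r = {..<l} \<times> {..<r+1}"
  by (auto simp: coords_def)
lemma sumP: "(\<Sum>t\<in>punct_coords l r e. G t) = (\<Sum>i<l. \<Sum>s\<in>{..<r+1}-{e i}. G (i,s))"
  unfolding Psig by (subst sum.Sigma) auto

lemma sumC: "(\<Sum>t\<in>coords l r. G t) = (\<Sum>i<l. \<Sum>s<r+1. G (i,s))"
  unfolding Csig by (subst sum.cartesian_product) auto

lemma card_P: assumes "\<forall>i<l. e i < r + 1" shows "card (punct_coords l r e) = l * r"
proof -
  have "card (punct_coords l r e) = (\<Sum>i<l. card ({..<r+1} - {e i}))"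
    unfolding Psig by (rule card_SigmaI) auto
  also have "\<dots> = (\<Sum>i<l. r)" using assms by (intro sum.cong) auto
  finally show ?thesis by simp
qed
lemma row_lemma:
  fixes f a :: "nat \<Rightarrow> 'a::field"
  assumes two: "(2::'a) = 0" and fin: "finite S" and eS: "e \<in> S" and f0: "sum f S = 0"
  shows "(\<Sum>s\<in>S. a s ^ 2^k * f s) = (\<Sum>s\<in>S-{e}. (a s + a e)^2^k * f s)"
proof -
  have "f e + sum f (S-{e}) = 0" using f0 fin eS by (simp add: sum.remove)
  hence fe: "f e = - (\<Sum>s\<in>S-{e}. f s)" by (simp add: eq_neg_iff_add_eq_0)
  have "(\<Sum>s\<in>S. a s ^ 2^k * f s) = a e ^ 2^k * f e + (\<Sum>s\<in>S-{e}. a s ^ 2^k * f s)"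
    using fin eS by (rule sum.remove)
  also have "a e ^ 2^k * f e = - (\<Sum>s\<in>S-{e}. a e ^ 2^k * f s)"
    unfolding fe by (simp only: sum_distrib_left mult_minus_right)
  also have "- (\<Sum>s\<in>S-{e}. a e ^ 2^k * f s) + (\<Sum>s\<in>S-{e}. a s ^ 2^k * f s)
      = (\<Sum>s\<in>S-{e}. (a s ^ 2^k - a e ^ 2^k) * f s)"
    by (simp only: left_diff_distrib sum_subtractf) simp
  also have "\<dots> = (\<Sum>s\<in>S-{e}. (a s + a e)^2^k * f s)"
  proof (rule sum.cong[OF refl])
    fix s
    have "a s ^ 2^k - a e ^ 2^k = a s ^ 2^k + a e ^ 2^k"
      unfolding diff_conv_add_uminus minus_eq_plus2[OF two, of "a e ^ 2^k"] ..
    thus "(a s ^ 2^k - a e ^ 2^k) * f s = (a s + a e)^2^k * f s" unfolding frob_add[OF two] by simp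
  qed
  finally show ?thesis .
qed


lemma punct_eq:
  fixes \<alpha> :: "nat \<Rightarrow> nat \<Rightarrow> 'a::field"
  assumes two: "(2::'a) = 0" and e: "\<forall>i<l. e i < r + 1"
  shows "puncture (punct_coords l r e) (code_C l r h \<alpha>) =
         Kc h (\<lambda>(i,s). \<alpha> i s + \<alpha> i (e i)) (punct_coords l r e)"
    (is "puncture ?P ?C = Kc h ?\<beta> ?P")
proof -
  have rowP: "(\<Sum>i<l. \<Sum>s<r+1. \<alpha> i s ^ 2^k * x (i,s)) =
      (\<Sum>t\<in>?P. ?\<beta> t ^ 2^k * x t)" if rs: "\<forall>i<l. (\<Sum>s<r+1. x (i,s)) = 0" for x k
  proof -
    have "(\<Sum>i<l. \<Sum>s<r+1. \<alpha> i s ^ 2^k * x (i,s)) =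
       (\<Sum>i<l. \<Sum>s\<in>{..<r+1}-{e i}. (\<alpha> i s + \<alpha> i (e i)) ^ 2^k * x (i,s))"
    proof (rule sum.cong[OF refl])
      fix i assume "i \<in> {..<l}"
      hence il: "i < l" by simp
      show "(\<Sum>s<r+1. \<alpha> i s ^ 2^k * x (i,s)) =
       (\<Sum>s\<in>{..<r+1}-{e i}. (\<alpha> i s + \<alpha> i (e i)) ^ 2^k * x (i,s))"
        by (rule row_lemma[OF two, of "{..<r+1}" "e i" "\<lambda>s. x (i,s)" "\<alpha> i" k])
           (use rs e il in auto)
    qed
    also have "\<dots> = (\<Sum>t\<in>?P. ?\<beta> t ^ 2^k * x t)" by (simp add: sumP)
    finally show ?thesis .
  qed
  show ?thesis
  proof
    show "puncture ?P ?C \<subseteq> Kc h ?\<beta> ?P"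
    proof
      fix y assume "y \<in> puncture ?P ?C"
      then obtain x where x: "x \<in> ?C" and y: "y = (\<lambda>p. if p \<in> ?P then x p else 0)"
        by (auto simp: puncture_def)
      have rs: "\<forall>i<l. (\<Sum>s<r+1. x (i,s)) = 0" using x by (simp add: code_C_def)
      have "(\<Sum>t\<in>?P. ?\<beta> t ^ 2^(j-1) * y t) = 0" if "j \<in> {1..h}" for j
      proof -
        have "(\<Sum>t\<in>?P. ?\<beta> t ^ 2^(j-1) * y t) = (\<Sum>t\<in>?P. ?\<beta> t ^ 2^(j-1) * x t)"
          by (simp add: y)
        also have "\<dots> = (\<Sum>i<l. \<Sum>s<r+1. \<alpha> i s ^ 2^(j-1) * x (i,s))" using rowP[OF rs] by simp
        also have "\<dots> = (\<Sum>t\<in>coords l r. (\<lambda>(i,s). \<alpha> i s ^ 2^(j-1) * x (i,s)) t)" by (simp add: sumC)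
        also have "\<dots> = 0" using x that by (simp add: code_C_def)
        finally show ?thesis .
      qed
      thus "y \<in> Kc h ?\<beta> ?P" by (auto simp: Kc_def y)
    qed
  next
    show "Kc h ?\<beta> ?P \<subseteq> puncture ?P ?C"
    proof
      fix y assume yK: "y \<in> Kc h ?\<beta> ?P"
      have y0: "\<forall>p. p \<notin> ?P \<longrightarrow> y p = 0" using yK by (simp add: Kc_def)
      define x where "x p = (if p \<in> ?P then y p else if fst p < l \<and> snd p = e (fst p)
          then - (\<Sum>s\<in>{..<r+1}-{e (fst p)}. y (fst p, s)) else 0)" for p
      have rs: "\<forall>i<l. (\<Sum>s<r+1. x (i,s)) = 0"
      proof (intro allI impI)
        fix i assume il: "i < l"
        have ei: "e i \<in> {..<r+1}" using e il by simp
        have "(\<Sum>s<r+1. x (i,s)) = x (i, e i) + (\<Sum>s\<in>{..<r+1}-{e i}. x (i,s))"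
          using ei by (intro sum.remove) auto
        also have "(\<Sum>s\<in>{..<r+1}-{e i}. x (i,s)) = (\<Sum>s\<in>{..<r+1}-{e i}. y (i,s))"
          using il by (intro sum.cong) (auto simp: x_def punct_coords_def)
        also have "x (i, e i) = - (\<Sum>s\<in>{..<r+1}-{e i}. y (i,s))"
          using il by (simp add: x_def punct_coords_def)
        finally show "(\<Sum>s<r+1. x (i,s)) = 0" by simp
      qed
      have xP: "x t = y t" if "t \<in> ?P" for t using that by (simp add: x_def)
      have "x \<in> ?C"
        unfolding code_C_def
      proof (intro CollectI conjI allI impI ballI)
        fix p assume "p \<notin> coords l r"
        thus "x p = 0" using y0 e
          by (cases p) (auto simp: x_def coords_def punct_coords_def)
      next
        fix j :: nat assume j: "j \<in> {1..h}"
        have "(\<Sum>(i,s)\<in>coords l r. \<alpha> i s ^ 2^(j-1) * x (i,s)) = (\<Sum>i<l. \<Sum>s<r+1. \<alpha> i s ^ 2^(j-1) * x (i,s))"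
          by (simp add: sumC)
        also have "\<dots> = (\<Sum>t\<in>?P. ?\<beta> t ^ 2^(j-1) * x t)" using rowP[OF rs] by simp
        also have "\<dots> = (\<Sum>t\<in>?P. ?\<beta> t ^ 2^(j-1) * y t)" using xP by (intro sum.cong) auto
        also have "\<dots> = 0" using yK j by (simp add: Kc_def)
        finally show "(\<Sum>(i,s)\<in>coords l r. \<alpha> i s ^ 2^(j-1) * x (i,s)) = 0" .
      next
        fix i assume "i < l" thus "(\<Sum>s<r+1. x (i,s)) = 0" using rs by simp
      qed
      moreover have "y = (\<lambda>p. if p \<in> ?P then x p else 0)"
        using y0 xP by (auto simp: fun_eq_iff)
      ultimately show "y \<in> puncture ?P ?C" by (auto simp: puncture_def)
    qed
  qed
qed

theorem proposition10:
  fixes \<alpha> :: "nat \<Rightarrow> nat \<Rightarrow> 'a::{field,finite}"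
    and l r h :: nat and e :: "nat \<Rightarrow> nat"
  assumes "CHAR('a) = 2"
    and "l > 0" and "r > 0" and "h > 0"
    and "h \<le> l * r"
    and "\<forall>i<l. e i < r + 1"
  shows "is_mds (l * r) (l * r - h) (puncture (punct_coords l r e) (code_C l r h \<alpha>))
     \<longleftrightarrow> hwise_indep h (\<lambda>(i,s). \<alpha> i s + \<alpha> i (e i)) (punct_coords l r e)"
proof -
  have two: "(2::'a) = 0" using of_nat_CHAR[where 'a='a] assms(1) by simp
  have fin: "finite (punct_coords l r e)" by (simp add: Psig)
  show ?thesis
    unfolding punct_eq[OF two assms(6)]
    by (rule mds_Kc[OF two fin card_P[OF assms(6)] assms(5)])
qed


end
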